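(* Assume the diffusion targeting $P$ satisfies condition (D) with $\alpha,\beta>0$ and condition (G) with $\lambda_a>0$ and $q_a\in\{0,1\}$. Let $w(x)=(v^2+\|x\|_2^2)^{q_w-u}$ with $q_w\ge0$, $u\ge0$, $v>0$, and if $q_a=1$ assume $q_w-u<2\alpha/\lambda_a$. Let $k(x,x')=w(x)w(x')\langle x,x'\rangle$. Then there is $g\in\mathcal{G}_{k\mathrm{Id}}$ with $\|g\|_{\mathcal{G}_{k\mathrm{Id}}}=\sqrt D$ such that, for some $\nu\in\mathbb{R}$ and $\eta>0$, $\mathcal{T}_Pg(x)\ge\nu$ for all $x\in\mathbb{R}^D$ and $\liminf_{\|x\|_2\to\infty}\|x\|_2^{-2(q_w-u+1)}\mathcal{T}_Pg(x)\ge\eta$.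
   Context: Setting: $P$ has a positive $C^1$ density $p$ on $\mathbb{R}^D$; $\sigma:\mathbb{R}^D\to\mathbb{R}^{D\times D'}$, $a=\sigma\sigma^\top$, $c$ skew-symmetric, $m=a+c$ with $pm$ continuously differentiable; $b=\langle\nabla,pm\rangle/(2p)$ with $\langle\nabla,F\rangle_i=\sum_j\partial_jF_{ji}$; $\mathcal{T}_Pg=2\langle b,g\rangle+\langle m,\nabla g\rangle$ with $(\nabla g)_{ij}=\partial_ig_j$ and Frobenius pairing. Condition (G): $\|b(x)\|_2\le\frac{\lambda_b}4(1+\|x\|_2)$, $\|\sigma(x)\|_F\le\frac{\lambda_\sigma}4(1+\|x\|_2)$, $\|a(x)\|_{\mathrm{op}}\le\frac{\lambda_a}4(1+\|x\|_2^{q_a+1})$. Condition (D) (dissipativity): $2\langle b(x),x\rangle+\|\sigma(x)\|_F^2\le-\alpha\|x\|_2^2+\beta$ for all $x$. For a scalar kernel $k$, $\mathcal{G}_{k\mathrm{Id}}$ is the product of $D$ copies of the RKHS $\mathcal{H}_k$ with inner product $\sum_d\langle g_d,g'_d\rangle_{\mathcal{H}_k}$. *)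

theory Defs
  imports "HOL-Analysis.Analysis"
begin

text \<open>Elements of the pre-Hilbert space H_0 spanned by the sections k(.,x):
  finite lists of (coefficient, point).\<close>

definition h0_eval :: "('a \<Rightarrow> 'a \<Rightarrow> real) \<Rightarrow> (real \<times> 'a) list \<Rightarrow> 'a \<Rightarrow> real" where
  "h0_eval k cs y = (\<Sum>(c, x)\<leftarrow>cs. c * k y x)"

definition h0_inner :: "('a \<Rightarrow> 'a \<Rightarrow> real) \<Rightarrow> (real \<times> 'a) list \<Rightarrow> (real \<times> 'a) list \<Rightarrow> real" where
  "h0_inner k cs ds = (\<Sum>(c, x)\<leftarrow>cs. \<Sum>(d, z)\<leftarrow>ds. c * d * k x z)"

definition h0_norm :: "('a \<Rightarrow> 'a \<Rightarrow> real) \<Rightarrow> (real \<times> 'a) list \<Rightarrow> real" where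
  "h0_norm k cs = sqrt (h0_inner k cs cs)"

definition h0_diff :: "(real \<times> 'a) list \<Rightarrow> (real \<times> 'a) list \<Rightarrow> (real \<times> 'a) list" where
  "h0_diff cs ds = cs @ map (\<lambda>(d, z). (- d, z)) ds"

text \<open>f belongs to the RKHS H_k and has RKHS norm r: f is the pointwise limit of an
  H_0-Cauchy sequence whose H_0 norms converge to r (completion of H_0).\<close>

definition in_rkhs :: "('a \<Rightarrow> 'a \<Rightarrow> real) \<Rightarrow> ('a \<Rightarrow> real) \<Rightarrow> real \<Rightarrow> bool" where
  "in_rkhs k f r \<longleftrightarrow>
     (\<exists>F :: nat \<Rightarrow> (real \<times> 'a) list.
        (\<forall>\<epsilon>>0. \<exists>N. \<forall>m\<ge>N. \<forall>n\<ge>N. h0_norm k (h0_diff (F m) (F n)) < \<epsilon>) \<and>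
        (\<forall>y. (\<lambda>n. h0_eval k (F n) y) \<longlonglongrightarrow> f y) \<and>
        (\<lambda>n. h0_norm k (F n)) \<longlonglongrightarrow> r)"

definition in_G_kId :: "(real^'n \<Rightarrow> real^'n \<Rightarrow> real) \<Rightarrow> (real^'n \<Rightarrow> real^'n) \<Rightarrow> real \<Rightarrow> bool" where
  "in_G_kId k g r \<longleftrightarrow>
     (\<exists>rs :: 'n \<Rightarrow> real. (\<forall>d. in_rkhs k (\<lambda>x. g x $ d) (rs d)) \<and> r = sqrt (\<Sum>d\<in>UNIV. (rs d)\<^sup>2))"

definition C1_fun :: "('a::euclidean_space \<Rightarrow> 'b::real_normed_vector) \<Rightarrow> bool" where
  "C1_fun f \<longleftrightarrow> (\<exists>f' :: 'a \<Rightarrow> ('a \<Rightarrow>\<^sub>L 'b).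
      (\<forall>x. (f has_derivative blinfun_apply (f' x)) (at x)) \<and> continuous_on UNIV f')"

definition partial :: "'n::finite \<Rightarrow> (real^'n \<Rightarrow> 'b::real_normed_vector) \<Rightarrow> real^'n \<Rightarrow> 'b" where
  "partial i f x = frechet_derivative f (at x) (axis i 1)"

text \<open>b = <nabla, p m> / (2p), with <nabla, F>_i = sum_j d_j F_{ji}.\<close>
definition drift_b :: "(real^'n \<Rightarrow> real) \<Rightarrow> (real^'n \<Rightarrow> real^'n^'n) \<Rightarrow> real^'n \<Rightarrow> real^'n" where
  "drift_b p m x = (1 / (2 * p x)) *\<^sub>R (\<chi> i. \<Sum>j\<in>UNIV. partial j (\<lambda>y. p y *\<^sub>R m y) x $ j $ i)"

text \<open>T_P g = 2<b,g> + <m, nabla g>, (nabla g)_{ij} = d_i g_j, Frobenius pairing.\<close>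
definition stein_op :: "(real^'n \<Rightarrow> real) \<Rightarrow> (real^'n \<Rightarrow> real^'n^'n) \<Rightarrow> (real^'n \<Rightarrow> real^'n) \<Rightarrow> real^'n \<Rightarrow> real" where
  "stein_op p m g x = 2 * (drift_b p m x \<bullet> g x) + (\<Sum>i\<in>UNIV. \<Sum>j\<in>UNIV. m x $ i $ j * partial i g x $ j)"

definition op_norm :: "real^'n^'n \<Rightarrow> real" where
  "op_norm A = onorm (\<lambda>v. A *v v)"

end

theory Submission
  imports Defs
begin

lemma rkhs_comp:
  fixes w :: "real^'n \<Rightarrow> real" and d :: 'n
  assumes wpos: "\<And>x. w x > 0"
  shows "in_rkhs (\<lambda>x x'. w x * w x' * (x \<bullet> x')) (\<lambda>x. - w x * x $ d) 1"
proof -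
  define z :: "real^'n" where "z = axis d 1"
  define c where "c = - 1 / w z"
  have wz: "w z > 0" using wpos by auto
  have zz: "z \<bullet> z = 1" by (simp add: z_def inner_axis_axis)
  show ?thesis unfolding in_rkhs_def
  proof (intro exI[of _ "\<lambda>n. [(c, z)]"] conjI allI impI)
    fix \<epsilon> :: real assume "\<epsilon> > 0"
    then show "\<exists>N. \<forall>m\<ge>N. \<forall>n\<ge>N. h0_norm (\<lambda>x x'. w x * w x' * (x \<bullet> x')) (h0_diff [(c, z)] [(c, z)]) < \<epsilon>"
      by (simp add: h0_norm_def h0_inner_def h0_diff_def)
  next
    fix y :: "real^'n"
    have "h0_eval (\<lambda>x x'. w x * w x' * (x \<bullet> x')) [(c, z)] y = - w y * y $ d"
      using wz by (simp add: h0_eval_def c_def z_def inner_axis)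
    then show "(\<lambda>n. h0_eval (\<lambda>x x'. w x * w x' * (x \<bullet> x')) [(c, z)] y) \<longlonglongrightarrow> - w y * y $ d"
      by simp
  next
    have "h0_norm (\<lambda>x x'. w x * w x' * (x \<bullet> x')) [(c, z)] = 1"
      using wz zz by (simp add: h0_norm_def h0_inner_def c_def power2_eq_square[symmetric])
    then show "(\<lambda>n. h0_norm (\<lambda>x x'. w x * w x' * (x \<bullet> x')) [(c, z)]) \<longlonglongrightarrow> 1" by simp
  qed
qed

lemma normsq_deriv: "((\<lambda>x::real^'n. (norm x)\<^sup>2) has_derivative (\<lambda>h. 2 * (x \<bullet> h))) (at x)"
proof -
  have "((\<lambda>x::real^'n. x \<bullet> x) has_derivative (\<lambda>h. x \<bullet> h + h \<bullet> x)) (at x)"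
    by (auto intro!: derivative_eq_intros)
  then show ?thesis by (simp add: power2_norm_eq_inner inner_commute)
qed

lemma tendsto_aux:
  fixes e \<delta> C v :: real
  shows "((\<lambda>r. r powr (-2*(e+1)) * ((v\<^sup>2 + r\<^sup>2) powr e * (\<delta> * r\<^sup>2 - C))) \<longlongrightarrow> \<delta>) at_top"
proof -
  have lim: "((\<lambda>r::real. (1 + v\<^sup>2 * (inverse r)\<^sup>2) powr e * (\<delta> - C * (inverse r)\<^sup>2)) \<longlongrightarrow> (1 + v\<^sup>2 * 0\<^sup>2) powr e * (\<delta> - C * 0\<^sup>2)) at_top"
    by (intro tendsto_intros tendsto_inverse_0_at_top filterlim_ident) auto
  have ev: "\<forall>\<^sub>F r in at_top. (1 + v\<^sup>2 * (inverse r)\<^sup>2) powr e * (\<delta> - C * (inverse r)\<^sup>2)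
        = r powr (-2*(e+1)) * ((v\<^sup>2 + r\<^sup>2) powr e * (\<delta> * r\<^sup>2 - C))"
    using eventually_gt_at_top[of 0]
  proof eventually_elim
    case (elim r)
    have t: "r powr (-2*(e+1)) = (r\<^sup>2) powr (-e) / r\<^sup>2"
    proof -
      have "-2*(e+1) = 2 * (-e) - 2" by simp
      then have "r powr (-2*(e+1)) = r powr (2 * (-e)) / r powr 2"
        by (simp only: powr_diff)
      also have "r powr (2 * (-e)) = (r powr 2) powr (-e)" by (simp add: powr_powr)
      finally show ?thesis using elim by (simp add: powr_numeral)
    qed
    have "1 + v\<^sup>2 * (inverse r)\<^sup>2 = (v\<^sup>2 + r\<^sup>2) / r\<^sup>2" using elim
      by (simp add: field_simps)
    then have "(1 + v\<^sup>2 * (inverse r)\<^sup>2) powr e = (v\<^sup>2 + r\<^sup>2) powr e / (r\<^sup>2) powr e"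
      by (simp add: powr_divide)
    moreover have "(r\<^sup>2) powr (-e) = inverse ((r\<^sup>2) powr e)" by (simp add: powr_minus)
    moreover have "\<delta> - C * (inverse r)\<^sup>2 = (\<delta> * r\<^sup>2 - C) / r\<^sup>2" using elim by (simp add: field_simps)
    moreover have "(r\<^sup>2) powr e > 0" using elim by simp
    ultimately have key: "(1 + v\<^sup>2 * (inverse r)\<^sup>2) powr e = (r\<^sup>2) powr (-e) * (v\<^sup>2 + r\<^sup>2) powr e"
      by (simp add: divide_inverse mult.commute)
    show ?case unfolding t key \<open>\<delta> - C * (inverse r)\<^sup>2 = (\<delta> * r\<^sup>2 - C) / r\<^sup>2\<close>
      by (simp add: field_simps)
  qed
  show ?thesis using Lim_transform_eventually[OF lim ev] by simp
qed

lemma trace_aat: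
  fixes S :: "real^'m^'n"
  shows "(\<Sum>i\<in>UNIV. (S ** transpose S) $ i $ i) = (norm S)\<^sup>2"
proof -
  have 1: "\<And>i. (S ** transpose S) $ i $ i = S $ i \<bullet> S $ i"
    unfolding matrix_matrix_mult_def transpose_def inner_vec_def by simp
  have 2: "(norm S)\<^sup>2 = (\<Sum>i\<in>UNIV. S $ i \<bullet> S $ i)"
    unfolding power2_norm_eq_inner inner_vec_def ..
  show ?thesis unfolding 1 2 ..
qed

lemma skew_diag:
  fixes C :: "real^'n^'n"
  assumes "transpose C = - C"
  shows "C $ i $ i = 0"
proof -
  have "transpose C $ i $ i = (- C) $ i $ i" using assms by simp
  then show ?thesis by (simp add: transpose_def)
qed

lemma skew_quad:
  fixes C :: "real^'n^'n"
  assumes "transpose C = - C"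
  shows "(\<Sum>i\<in>UNIV. \<Sum>j\<in>UNIV. C $ i $ j * x $ i * x $ j) = 0"
proof -
  have cji: "\<And>i j. C $ j $ i = - C $ i $ j"
  proof -
    fix i j
    have "transpose C $ i $ j = (- C) $ i $ j" using assms by simp
    then show "C $ j $ i = - C $ i $ j" by (simp add: transpose_def)
  qed
  have "(\<Sum>i\<in>UNIV. \<Sum>j\<in>UNIV. C $ i $ j * x $ i * x $ j)
      = (\<Sum>j\<in>UNIV. \<Sum>i\<in>UNIV. C $ i $ j * x $ i * x $ j)" by (rule sum.swap)
  also have "\<dots> = (\<Sum>j\<in>UNIV. \<Sum>i\<in>UNIV. - (C $ j $ i * x $ j * x $ i))"
    by (intro sum.cong refl) (subst cji, simp)
  also have "\<dots> = - (\<Sum>i\<in>UNIV. \<Sum>j\<in>UNIV. C $ i $ j * x $ i * x $ j)"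
    by (simp add: sum_negf)
  finally show ?thesis by simp
qed

lemma quad_form:
  fixes A :: "real^'n^'n"
  shows "(\<Sum>i\<in>UNIV. \<Sum>j\<in>UNIV. A $ i $ j * x $ i * x $ j) = x \<bullet> (A *v x)"
  unfolding inner_vec_def matrix_vector_mult_def
  by (auto simp: sum_distrib_left intro!: sum.cong)

lemma quad_nonneg:
  fixes S :: "real^'m^'n"
  shows "x \<bullet> ((S ** transpose S) *v x) \<ge> 0"
proof -
  have "x \<bullet> ((S ** transpose S) *v x) = x \<bullet> (S *v (transpose S *v x))"
    by (simp only: matrix_vector_mul_assoc)
  also have "\<dots> = (x v* S) \<bullet> (transpose S *v x)" by (simp add: dot_lmul_matrix)
  also have "\<dots> = (transpose S *v x) \<bullet> (transpose S *v x)" by simp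
  finally show ?thesis by simp
qed

lemma quad_le:
  fixes A :: "real^'n^'n"
  shows "x \<bullet> (A *v x) \<le> op_norm A * (norm x)\<^sup>2"
proof -
  have "x \<bullet> (A *v x) \<le> norm x * norm (A *v x)" by (rule norm_cauchy_schwarz)
  also have "norm (A *v x) \<le> op_norm A * norm x"
    unfolding op_norm_def by (rule onorm) simp
  then have "norm x * norm (A *v x) \<le> norm x * (op_norm A * norm x)"
    by (simp add: mult_left_mono)
  finally show ?thesis by (simp add: power2_eq_square mult_ac)
qed

theorem mainTheorem7:
  fixes p :: "real^'n \<Rightarrow> real"
    and sigma :: "real^'n \<Rightarrow> real^'m^'n"
    and c :: "real^'n \<Rightarrow> real^'n^'n"
    and \<alpha> \<beta> lam_b lam_\<sigma> lam_a q\<^sub>w u v :: real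
    and q\<^sub>a :: nat
  defines "a \<equiv> (\<lambda>x. sigma x ** transpose (sigma x))"
  defines "m \<equiv> (\<lambda>x. a x + c x)"
  defines "b \<equiv> drift_b p m"
  defines "w \<equiv> (\<lambda>x::real^'n. (v\<^sup>2 + (norm x)\<^sup>2) powr (q\<^sub>w - u))"
  defines "k \<equiv> (\<lambda>x x'. w x * w x' * (x \<bullet> x'))"
  assumes p_pos: "\<forall>x. p x > 0"
    and p_density: "(p has_integral 1) UNIV"
    and p_C1: "C1_fun p"
    and c_skew: "\<forall>x. transpose (c x) = - c x"
    and pm_C1: "C1_fun (\<lambda>x. p x *\<^sub>R m x)"
    and G_b: "\<forall>x. norm (b x) \<le> lam_b / 4 * (1 + norm x)"
    and G_sigma: "\<forall>x. norm (sigma x) \<le> lam_\<sigma> / 4 * (1 + norm x)"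
    and G_a: "\<forall>x. op_norm (a x) \<le> lam_a / 4 * (1 + norm x ^ (q\<^sub>a + 1))"
    and D_diss: "\<forall>x. 2 * (b x \<bullet> x) + (norm (sigma x))\<^sup>2 \<le> - \<alpha> * (norm x)\<^sup>2 + \<beta>"
    and alpha_pos: "\<alpha> > 0" and beta_pos: "\<beta> > 0"
    and lam_a_pos: "lam_a > 0"
    and qa: "q\<^sub>a \<in> {0, 1}"
    and qw: "q\<^sub>w \<ge> 0" and u: "u \<ge> 0" and v: "v > 0"
    and qa1: "q\<^sub>a = 1 \<longrightarrow> q\<^sub>w - u < 2 * \<alpha> / lam_a"
  shows "\<exists>g :: real^'n \<Rightarrow> real^'n.
           in_G_kId k g (sqrt (real CARD('n))) \<and>
           (\<forall>x. g differentiable (at x)) \<and>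
           (\<exists>\<nu> \<eta>. \<eta> > 0 \<and>
              (\<forall>x. stein_op p m g x \<ge> \<nu>) \<and>
              Liminf at_infinity (\<lambda>x. ereal (norm x powr (- 2 * (q\<^sub>w - u + 1)) * stein_op p m g x))
                \<ge> ereal \<eta>)"
proof -
  define e where "e = q\<^sub>w - u"
  define S where "S = (\<lambda>x::real^'n. v\<^sup>2 + (norm x)\<^sup>2)"
  have Spos: "\<And>x. S x > 0" using v unfolding S_def by (simp add: add_pos_nonneg)
  have w_fun: "w = (\<lambda>x. S x powr e)" unfolding w_def S_def e_def by simp
  have w_eq: "\<And>x. w x = S x powr e" unfolding w_fun by simp
  have wpos: "\<And>x. w x > 0" unfolding w_eq using Spos by (metis order_less_irrefl powr_gt_zero)
  define g where "g = (\<lambda>x::real^'n. - (w x) *\<^sub>R x)"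
  define P where "P = (\<lambda>x. e * S x powr (e - 1))"
  have PS: "\<And>x. P x * S x = e * w x"
  proof -
    fix x
    have "S x > 0" by (rule Spos)
    then show "P x * S x = e * w x" unfolding P_def w_eq by (simp add: powr_diff)
  qed
  have wder: "\<And>x. (w has_derivative (\<lambda>h. P x * (2 * (x \<bullet> h)))) (at x)"
  proof -
    fix x
    have Sd: "(S has_derivative (\<lambda>h. 2 * (x \<bullet> h))) (at x within UNIV)"
      unfolding S_def using has_derivative_add[OF has_derivative_const normsq_deriv] by simp
    have "((\<lambda>x. S x powr e) has_derivative
        (\<lambda>h. S x powr e * (0 * ln (S x) + 2 * (x \<bullet> h) * e / S x))) (at x within UNIV)"
      by (rule has_derivative_powr[OF Sd has_derivative_const Spos UNIV_I])
    moreover have "(\<lambda>h. S x powr e * (0 * ln (S x) + 2 * (x \<bullet> h) * e / S x)) = (\<lambda>h. P x * (2 * (x \<bullet> h)))"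
      using Spos[of x] unfolding P_def by (auto simp: powr_diff field_simps)
    ultimately show "(w has_derivative (\<lambda>h. P x * (2 * (x \<bullet> h)))) (at x)"
      unfolding w_fun by simp
  qed
  have gder: "\<And>x. (g has_derivative (\<lambda>h. - (w x) *\<^sub>R h - (P x * (2 * (x \<bullet> h))) *\<^sub>R x)) (at x)"
  proof -
    fix x
    have "((\<lambda>x. - w x *\<^sub>R x) has_derivative (\<lambda>h. - w x *\<^sub>R h + - (P x * (2 * (x \<bullet> h))) *\<^sub>R x)) (at x)"
      by (rule has_derivative_scaleR[OF has_derivative_minus[OF wder] has_derivative_ident])
    then show "(g has_derivative (\<lambda>h. - (w x) *\<^sub>R h - (P x * (2 * (x \<bullet> h))) *\<^sub>R x)) (at x)"
      unfolding g_def by (simp add: algebra_simps)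
  qed
  have partial_g: "\<And>x i j. partial i g x $ j = - w x * (if j = i then 1 else 0) - 2 * P x * (x $ i * x $ j)"
  proof -
    fix x i j
    have "partial i g x = - (w x) *\<^sub>R axis i 1 - (P x * (2 * (x \<bullet> axis i 1))) *\<^sub>R x"
      unfolding partial_def using frechet_derivative_at[OF gder[of x]] by metis
    then show "partial i g x $ j = - w x * (if j = i then 1 else 0) - 2 * P x * (x $ i * x $ j)"
      by (simp add: inner_axis, simp add: axis_def)
  qed
  define Q where "Q = (\<lambda>x. x \<bullet> (a x *v x))"
  have Qnn: "\<And>x. Q x \<ge> 0" unfolding Q_def a_def by (rule quad_nonneg)
  have sum_eq: "\<And>x. (\<Sum>i\<in>UNIV. \<Sum>j\<in>UNIV. m x $ i $ j * partial i g x $ j)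
      = - w x * (norm (sigma x))\<^sup>2 - 2 * P x * Q x"
  proof -
    fix x
    have cd: "\<And>i. c x $ i $ i = 0" using c_skew skew_diag by blast
    have "(\<Sum>i\<in>UNIV. \<Sum>j\<in>UNIV. m x $ i $ j * partial i g x $ j)
        = (\<Sum>i\<in>UNIV. \<Sum>j\<in>UNIV. - w x * (m x $ i $ j * (if j = i then 1 else 0))
             + (- 2 * P x) * (a x $ i $ j * x $ i * x $ j + c x $ i $ j * x $ i * x $ j))"
      unfolding partial_g m_def by (intro sum.cong refl) (simp add: algebra_simps)
    also have "\<dots> = - w x * (\<Sum>i\<in>UNIV. \<Sum>j\<in>UNIV. m x $ i $ j * (if j = i then 1 else 0))
        + (- 2 * P x) * ((\<Sum>i\<in>UNIV. \<Sum>j\<in>UNIV. a x $ i $ j * x $ i * x $ j)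
            + (\<Sum>i\<in>UNIV. \<Sum>j\<in>UNIV. c x $ i $ j * x $ i * x $ j))"
      by (simp only: sum.distrib sum_distrib_left[symmetric])
    also have "(\<Sum>i\<in>UNIV. \<Sum>j\<in>UNIV. m x $ i $ j * (if j = i then 1 else 0)) = (\<Sum>i\<in>UNIV. m x $ i $ i)"
      by (intro sum.cong refl) (simp add: if_distrib cong: if_cong)
    also have "\<dots> = (\<Sum>i\<in>UNIV. a x $ i $ i)" unfolding m_def by (simp add: cd)
    also have "\<dots> = (norm (sigma x))\<^sup>2" unfolding a_def by (rule trace_aat)
    also have "(\<Sum>i\<in>UNIV. \<Sum>j\<in>UNIV. c x $ i $ j * x $ i * x $ j) = 0"
      using c_skew skew_quad by blast
    also have "(\<Sum>i\<in>UNIV. \<Sum>j\<in>UNIV. a x $ i $ j * x $ i * x $ j) = Q x"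
      unfolding Q_def by (rule quad_form)
    finally show "(\<Sum>i\<in>UNIV. \<Sum>j\<in>UNIV. m x $ i $ j * partial i g x $ j)
      = - w x * (norm (sigma x))\<^sup>2 - 2 * P x * Q x" by simp
  qed
  have T_eq: "\<And>x. stein_op p m g x = - w x * (2 * (b x \<bullet> x) + (norm (sigma x))\<^sup>2) - 2 * P x * Q x"
    unfolding stein_op_def sum_eq unfolding b_def g_def by (simp add: algebra_simps)
  define K where "K = max e 0 * lam_a / 2"
  have K_nn: "K \<ge> 0" unfolding K_def using lam_a_pos by simp
  have T_ge1: "\<And>x. stein_op p m g x \<ge> w x * (\<alpha> * (norm x)\<^sup>2 - \<beta> - K * (1 + norm x ^ (q\<^sub>a + 1)))"
  proof -
    fix x
    have A: "- w x * (2 * (b x \<bullet> x) + (norm (sigma x))\<^sup>2) \<ge> w x * (\<alpha> * (norm x)\<^sup>2 - \<beta>)"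
    proof -
      have "w x * (\<alpha> * (norm x)\<^sup>2 - \<beta>) \<le> w x * (- (2 * (b x \<bullet> x) + (norm (sigma x))\<^sup>2))"
        using D_diss wpos[of x] by (intro mult_left_mono) (auto simp: algebra_simps)
      then show ?thesis by (simp add: algebra_simps)
    qed
    have B: "2 * P x * Q x \<le> w x * (K * (1 + norm x ^ (q\<^sub>a + 1)))"
    proof (cases "e \<le> 0")
      case True
      have "P x \<le> 0" unfolding P_def using True Spos[of x] by (simp add: mult_nonpos_nonneg)
      then have "2 * P x * Q x \<le> 0" using Qnn[of x] by (simp add: mult_nonpos_nonneg)
      moreover have "K = 0" unfolding K_def using True by simp
      ultimately show ?thesis by simp
    next
      case False
      define L where "L = lam_a / 4 * (1 + norm x ^ (q\<^sub>a + 1))"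
      have L_nn: "L \<ge> 0" unfolding L_def using lam_a_pos by simp
      have P_nn: "P x \<ge> 0" unfolding P_def using False Spos[of x] by simp
      have "Q x \<le> op_norm (a x) * (norm x)\<^sup>2" unfolding Q_def by (rule quad_le)
      also have "\<dots> \<le> L * (norm x)\<^sup>2" unfolding L_def using G_a by (intro mult_right_mono) auto
      finally have "2 * P x * Q x \<le> 2 * P x * (L * (norm x)\<^sup>2)"
        using P_nn by (intro mult_left_mono) auto
      also have "\<dots> = 2 * L * (P x * (norm x)\<^sup>2)" by (simp add: algebra_simps)
      also have "P x * (norm x)\<^sup>2 \<le> P x * S x" unfolding S_def using P_nn
        by (intro mult_left_mono) auto
      then have "2 * L * (P x * (norm x)\<^sup>2) \<le> 2 * L * (P x * S x)"
        by (rule mult_left_mono) (use L_nn in auto)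
      also have "2 * L * (P x * S x) = w x * (K * (1 + norm x ^ (q\<^sub>a + 1)))"
        unfolding PS K_def L_def using False by (simp add: algebra_simps)
      finally show ?thesis .
    qed
    show "stein_op p m g x \<ge> w x * (\<alpha> * (norm x)\<^sup>2 - \<beta> - K * (1 + norm x ^ (q\<^sub>a + 1)))"
      unfolding T_eq using A B by (simp add: algebra_simps)
  qed
  obtain \<delta> C where dpos: "\<delta> > 0" and Cpos: "C > 0"
    and dC: "\<And>r::real. r \<ge> 0 \<Longrightarrow> \<alpha> * r\<^sup>2 - \<beta> - K * (1 + r ^ (q\<^sub>a + 1)) \<ge> \<delta> * r\<^sup>2 - C"
  proof (cases "q\<^sub>a = 0")
    case True
    show ?thesis
    proof (rule that[of "\<alpha> / 2" "\<beta> + K + K\<^sup>2 / (2 * \<alpha>)"])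
      show "\<alpha> / 2 > 0" using alpha_pos by simp
      show "\<beta> + K + K\<^sup>2 / (2 * \<alpha>) > 0" using beta_pos K_nn alpha_pos by (simp add: add_pos_nonneg)
      fix r :: real assume "r \<ge> 0"
      have sq: "0 \<le> (\<alpha> * r - K)\<^sup>2 / (2 * \<alpha>)" using alpha_pos by simp
      have "(\<alpha> * r - K)\<^sup>2 / (2 * \<alpha>) = \<alpha> / 2 * r\<^sup>2 - K * r + K\<^sup>2 / (2 * \<alpha>)"
        using alpha_pos by (simp add: field_simps power2_eq_square)
      then show "\<alpha> * r\<^sup>2 - \<beta> - K * (1 + r ^ (q\<^sub>a + 1)) \<ge> \<alpha> / 2 * r\<^sup>2 - (\<beta> + K + K\<^sup>2 / (2 * \<alpha>))"
        using sq True by (simp add: algebra_simps)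
    qed
  next
    case False
    then have qa1': "q\<^sub>a = 1" using qa by simp
    have "K < \<alpha>"
    proof (cases "e \<le> 0")
      case True then show ?thesis unfolding K_def using alpha_pos by simp
    next
      case False
      then have "e < 2 * \<alpha> / lam_a" using qa1 qa1' unfolding e_def by simp
      then have "e * lam_a < 2 * \<alpha>" using lam_a_pos by (simp add: field_simps)
      then show ?thesis unfolding K_def using False by simp
    qed
    show ?thesis
    proof (rule that[of "\<alpha> - K" "\<beta> + K"])
      show "\<alpha> - K > 0" using \<open>K < \<alpha>\<close> by simp
      show "\<beta> + K > 0" using beta_pos K_nn by simp
      fix r :: real assume "r \<ge> 0"
      show "\<alpha> * r\<^sup>2 - \<beta> - K * (1 + r ^ (q\<^sub>a + 1)) \<ge> (\<alpha> - K) * r\<^sup>2 - (\<beta> + K)"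
        using qa1' by (simp add: algebra_simps power2_eq_square)
    qed
  qed
  have T_ge: "\<And>x. stein_op p m g x \<ge> w x * (\<delta> * (norm x)\<^sup>2 - C)"
  proof -
    fix x
    have "w x * (\<delta> * (norm x)\<^sup>2 - C) \<le> w x * (\<alpha> * (norm x)\<^sup>2 - \<beta> - K * (1 + norm x ^ (q\<^sub>a + 1)))"
      using dC[of "norm x"] wpos[of x] by (intro mult_left_mono) auto
    then show "stein_op p m g x \<ge> w x * (\<delta> * (norm x)\<^sup>2 - C)" using T_ge1[of x] by linarith
  qed
  have inG: "in_G_kId k g (sqrt (real CARD('n)))"
    unfolding in_G_kId_def
  proof (intro exI[of _ "\<lambda>_. 1"] conjI allI)
    fix d :: 'n
    have "(\<lambda>x. g x $ d) = (\<lambda>x. - w x * x $ d)" unfolding g_def by simp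
    then show "in_rkhs k (\<lambda>x. g x $ d) 1" unfolding k_def using rkhs_comp[OF wpos] by simp
  next
    show "sqrt (real CARD('n)) = sqrt (\<Sum>d\<in>(UNIV::'n set). (1::real)\<^sup>2)" by simp
  qed
  have gdiff: "\<forall>x. g differentiable (at x)"
    using gder unfolding differentiable_def by blast
  define W where "W = (v\<^sup>2 + C / \<delta>) powr e + (v\<^sup>2) powr e"
  have Wpos: "W > 0"
  proof -
    have "v\<^sup>2 + C / \<delta> > 0" using v dpos Cpos by (simp add: add_pos_pos)
    then have "(v\<^sup>2 + C / \<delta>) powr e > 0" by simp
    moreover have "(v\<^sup>2) powr e > 0" using v by simp
    ultimately show ?thesis unfolding W_def by (rule add_pos_pos)
  qed
  have lower: "\<forall>x. stein_op p m g x \<ge> - C * W"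
  proof
    fix x :: "real^'n"
    show "stein_op p m g x \<ge> - C * W"
    proof (cases "\<delta> * (norm x)\<^sup>2 \<ge> C")
      case True
      then have "w x * (\<delta> * (norm x)\<^sup>2 - C) \<ge> 0" using wpos[of x] by simp
      moreover have "- C * W \<le> 0" using Cpos Wpos by simp
      ultimately show ?thesis using T_ge[of x] by linarith
    next
      case False
      then have r2: "(norm x)\<^sup>2 \<le> C / \<delta>" using dpos by (simp add: field_simps)
      have "w x \<le> W"
      proof (cases "e \<ge> 0")
        case True
        have "S x powr e \<le> (v\<^sup>2 + C / \<delta>) powr e"
          using r2 Spos[of x] True unfolding S_def by (intro powr_mono2) auto
        moreover have "(v\<^sup>2) powr e \<ge> 0" by simp
        ultimately show ?thesis unfolding W_def w_eq by linarith
      next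
        case False
        have "S x powr e \<le> (v\<^sup>2) powr e"
          using Spos[of x] False v unfolding S_def by (intro powr_mono2') auto
        moreover have "(v\<^sup>2 + C / \<delta>) powr e \<ge> 0" by simp
        ultimately show ?thesis unfolding W_def w_eq by linarith
      qed
      have "w x * (\<delta> * (norm x)\<^sup>2 - C) \<ge> w x * (- C)"
        by (rule mult_left_mono) (use dpos wpos[of x] in auto)
      moreover have "C * w x \<le> C * W" using \<open>w x \<le> W\<close> Cpos by (intro mult_left_mono) auto
      ultimately have "w x * (\<delta> * (norm x)\<^sup>2 - C) \<ge> - C * W" by (simp add: algebra_simps)
      then show ?thesis using T_ge[of x] by linarith
    qed
  qed
  define f where "f = (\<lambda>r::real. r powr (-2*(e+1)) * ((v\<^sup>2 + r\<^sup>2) powr e * (\<delta> * r\<^sup>2 - C)))"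
  have ev_r: "\<forall>\<^sub>F r in at_top. r > 0 \<and> f r > \<delta> / 2"
  proof (rule eventually_conj)
    show "\<forall>\<^sub>F r in at_top. r > (0::real)" by (rule eventually_gt_at_top)
    show "\<forall>\<^sub>F r in at_top. f r > \<delta> / 2"
      using order_tendstoD(1)[OF tendsto_aux[of e v \<delta> C, folded f_def], of "\<delta>/2"] dpos by simp
  qed
  have ev_x: "\<forall>\<^sub>F x in at_infinity. norm x > 0 \<and> f (norm x) > \<delta> / 2"
    using filterlim_norm_at_top ev_r unfolding filterlim_iff by blast
  have liminf: "Liminf at_infinity (\<lambda>x. ereal (norm x powr (- 2 * (q\<^sub>w - u + 1)) * stein_op p m g x)) \<ge> ereal (\<delta> / 2)"
  proof (rule Liminf_bounded)
    show "\<forall>\<^sub>F x in at_infinity. ereal (\<delta> / 2) \<le> ereal (norm x powr (- 2 * (q\<^sub>w - u + 1)) * stein_op p m g x)"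
      using ev_x
    proof eventually_elim
      case (elim x)
      have "f (norm x) = norm x powr (- 2 * (q\<^sub>w - u + 1)) * (w x * (\<delta> * (norm x)\<^sup>2 - C))"
        unfolding f_def w_eq S_def e_def by simp
      also have "\<dots> \<le> norm x powr (- 2 * (q\<^sub>w - u + 1)) * stein_op p m g x"
        using T_ge[of x] by (intro mult_left_mono) auto
      finally show ?case using elim by simp
    qed
  qed
  show ?thesis
    using inG gdiff lower liminf dpos
    by (intro exI[of _ g] conjI exI[of _ "- C * W"] exI[of _ "\<delta> / 2"]) auto
qed

end
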